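(* Let $Y$ be a random vector in $\mathbb{R}^d$ and let $Z=Y-\mathbb{E}[Y]$ satisfy: $\|Z\|$ is sub-gaussian with modulus $R>0$, i.e. $\Pr[\|Z\|\ge t]\le 2\exp\!\big(-\tfrac{t^2}{2R^2}\big)$ for all $t\ge 0$, and $\sigma^2:=\mathbb{E}\|Z\|^2\in(0,\infty)$. Let $K_{\mathrm{snr}}=\sigma/R$. Let $Y_1,\dots,Y_b$ be i.i.d. copies of $Y$ and define \[ \hat Y=\frac1b\sum_{i=1}^b Y_i,\qquad \hat\sigma^2=\frac1b\sum_{i=1}^b\|Y_i-\hat Y\|^2 . \] Then there is an absolute constant $c>0$ such that for every $\delta\in(0,1)$, with probability at least $1-\delta$, \[ \left|\frac{\hat\sigma^2}{\sigma^2}-1\right|\le c\cdot K_{\mathrm{snr}}^{-2}\cdot\left(\sqrt{\frac{\log\frac{2b}{\delta}}{b}}+\frac{\log\frac{2\max(b,d)}{\delta}}{b}\right). \]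
   Context: All norms are Euclidean. $K_{\mathrm{snr}}=\sigma/R$ is called the signal-to-noise ratio. *)

theory Defs
  imports "HOL-Probability.Probability"
begin

text \<open>Vectors in R^d are represented as functions nat => real, only the
coordinates 0..d-1 being relevant (the points of the product sigma-algebra
PiM {..<d} (%_. borel) are the extensional such functions).\<close>

definition vspace :: "nat \<Rightarrow> (nat \<Rightarrow> real) measure" where
  "vspace d = PiM {..<d} (\<lambda>_. borel)"

definition vnorm :: "nat \<Rightarrow> (nat \<Rightarrow> real) \<Rightarrow> real" where
  "vnorm d x = sqrt (\<Sum>j<d. (x j)\<^sup>2)"

definition mean_vec :: "nat \<Rightarrow> (nat \<Rightarrow> real) measure \<Rightarrow> (nat \<Rightarrow> real)" where
  "mean_vec d P = (\<lambda>j. if j < d then (\<integral>x. x j \<partial>P) else 0)"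

definition centered :: "nat \<Rightarrow> (nat \<Rightarrow> real) measure \<Rightarrow> (nat \<Rightarrow> real) \<Rightarrow> (nat \<Rightarrow> real)" where
  "centered d P x = (\<lambda>j. x j - mean_vec d P j)"

definition sigma_sq :: "nat \<Rightarrow> (nat \<Rightarrow> real) measure \<Rightarrow> real" where
  "sigma_sq d P = (\<integral>x. (vnorm d (centered d P x))\<^sup>2 \<partial>P)"

definition sample_mean :: "nat \<Rightarrow> nat \<Rightarrow> (nat \<Rightarrow> nat \<Rightarrow> real) \<Rightarrow> (nat \<Rightarrow> real)" where
  "sample_mean d b ys = (\<lambda>j. (1 / real b) * (\<Sum>i<b. ys i j))"

definition sample_var :: "nat \<Rightarrow> nat \<Rightarrow> (nat \<Rightarrow> nat \<Rightarrow> real) \<Rightarrow> real" where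
  "sample_var d b ys = (1 / real b) * (\<Sum>i<b. (vnorm d (\<lambda>j. ys i j - sample_mean d b ys j))\<^sup>2)"

end

theory Submission
  imports Defs
begin


definition Hk :: "nat \<Rightarrow> (nat \<Rightarrow> real) \<Rightarrow> (nat \<Rightarrow> real) \<Rightarrow> real" where
  "Hk d y y' = (\<Sum>j<d. (y j - y' j)\<^sup>2) / 2"

lemma vnorm_sq: "(vnorm d v)\<^sup>2 = (\<Sum>j<d. (v j)\<^sup>2)"
  unfolding vnorm_def by (simp add: sum_nonneg)

lemma var_pairs:
  fixes a :: "nat \<Rightarrow> real"
  assumes "b \<ge> 1"
  shows "(1/real b) * (\<Sum>i<b. (a i - (1/real b) * (\<Sum>k<b. a k))\<^sup>2)
       = (1/(real b)\<^sup>2) * (\<Sum>i<b. \<Sum>k<b. (a i - a k)\<^sup>2 / 2)"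
proof -
  define S where "S = (\<Sum>k<b. a k)"
  define Q where "Q = (\<Sum>k<b. (a k)\<^sup>2)"
  have bpos: "real b > 0" using assms by simp
  have l: "(\<Sum>i<b. (a i - (1/real b) * S)\<^sup>2) = Q - S\<^sup>2 / real b"
  proof -
    have "(\<Sum>i<b. (a i - (1/real b) * S)\<^sup>2) = (\<Sum>i<b. (a i)\<^sup>2 - 2 * (S / real b) * a i + (S/real b)\<^sup>2)"
      by (rule sum.cong) (auto simp: power2_eq_square algebra_simps)
    also have "\<dots> = Q - 2 * (S / real b) * S + real b * (S/real b)\<^sup>2"
      by (simp add: sum.distrib sum_subtractf Q_def S_def sum_distrib_left[symmetric] sum_divide_distrib[symmetric])
    finally show ?thesis using bpos by (simp add: power2_eq_square field_simps)
  qed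
  have r: "(\<Sum>i<b. \<Sum>k<b. (a i - a k)\<^sup>2 / 2) = real b * Q - S\<^sup>2"
  proof -
    have "(\<Sum>i<b. \<Sum>k<b. (a i - a k)\<^sup>2 / 2) = (\<Sum>i<b. \<Sum>k<b. (a i)\<^sup>2/2 + (a k)\<^sup>2/2 - a i * a k)"
      by (intro sum.cong refl) (simp add: power2_eq_square field_simps)
    also have "\<dots> = (\<Sum>i<b. real b * (a i)\<^sup>2/2 + Q/2 - a i * S)"
      by (intro sum.cong refl) (simp add: sum.distrib sum_subtractf Q_def S_def sum_distrib_left sum_divide_distrib)
    also have "\<dots> = real b * Q / 2 + real b * Q / 2 - S * S"
      by (simp add: sum.distrib sum_subtractf Q_def S_def sum_distrib_left[symmetric] sum_distrib_right[symmetric] sum_divide_distrib[symmetric])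
    finally show ?thesis by (simp add: power2_eq_square)
  qed
  show ?thesis unfolding S_def[symmetric] l r using bpos
    by (simp add: field_simps power2_eq_square)
qed

lemma sample_var_pairs:
  assumes "b \<ge> 1"
  shows "sample_var d b ys = (1/(real b)\<^sup>2) * (\<Sum>i<b. \<Sum>k<b. Hk d (ys i) (ys k))"
proof -
  have "sample_var d b ys = (1 / real b) * (\<Sum>i<b. \<Sum>j<d. (ys i j - sample_mean d b ys j)\<^sup>2)"
    unfolding sample_var_def vnorm_sq ..
  also have "\<dots> = (\<Sum>j<d. (1 / real b) * (\<Sum>i<b. (ys i j - (1/real b) * (\<Sum>k<b. ys k j))\<^sup>2))"
    by (subst sum.swap) (simp add: sum_distrib_left sample_mean_def)
  also have "\<dots> = (\<Sum>j<d. (1/(real b)\<^sup>2) * (\<Sum>i<b. \<Sum>k<b. (ys i j - ys k j)\<^sup>2 / 2))"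
    using var_pairs[OF assms] by simp
  also have "\<dots> = (1/(real b)\<^sup>2) * (\<Sum>j<d. \<Sum>i<b. \<Sum>k<b. (ys i j - ys k j)\<^sup>2 / 2)"
    by (simp add: sum_distrib_left)
  also have "(\<Sum>j<d. \<Sum>i<b. \<Sum>k<b. (ys i j - ys k j)\<^sup>2 / 2) = (\<Sum>i<b. \<Sum>k<b. \<Sum>j<d. (ys i j - ys k j)\<^sup>2 / 2)"
    by (subst sum.swap) (simp add: sum.swap[of _ "{..<d}" "{..<b}"])
  also have "\<dots> = (\<Sum>i<b. \<Sum>k<b. Hk d (ys i) (ys k))"
    unfolding Hk_def by (simp add: sum_divide_distrib)
  finally show ?thesis .
qed


lemma perm_reindex:
  fixes g :: "(nat \<Rightarrow> nat) \<Rightarrow> real"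
  assumes s: "\<sigma> permutes {..<b}"
  shows "(\<Sum>\<pi>\<in>{\<pi>. \<pi> permutes {..<b}}. g (\<pi> \<circ> \<sigma>)) = (\<Sum>\<pi>\<in>{\<pi>. \<pi> permutes {..<b}}. g \<pi>)"
proof (rule sum.reindex_bij_witness[where i="\<lambda>\<pi>. \<pi> \<circ> inv \<sigma>" and j="\<lambda>\<pi>. \<pi> \<circ> \<sigma>"])
  fix a assume "a \<in> {\<pi>. \<pi> permutes {..<b}}"
  then have a: "a permutes {..<b}" by simp
  show "a \<circ> \<sigma> \<circ> inv \<sigma> = a" using permutes_inv_o[OF s] by (simp add: o_assoc[symmetric])
  show "a \<circ> \<sigma> \<in> {\<pi>. \<pi> permutes {..<b}}" using permutes_compose[OF s a] by simp
  show "a \<circ> inv \<sigma> \<circ> \<sigma> = a" using permutes_inv_o[OF s] by (simp add: o_assoc[symmetric])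
  show "a \<circ> inv \<sigma> \<in> {\<pi>. \<pi> permutes {..<b}}" using permutes_compose[OF permutes_inv[OF s] a] by simp
  show "g (a \<circ> \<sigma>) = g (a \<circ> \<sigma>)" ..
qed

lemma perm_pair_sum:
  fixes f :: "nat \<Rightarrow> nat \<Rightarrow> real"
  assumes ab: "a < b" "c < b" "a \<noteq> c"
  shows "(\<Sum>\<pi>\<in>{\<pi>. \<pi> permutes {..<b}}. f (\<pi> a) (\<pi> c)) = (\<Sum>\<pi>\<in>{\<pi>. \<pi> permutes {..<b}}. f (\<pi> 0) (\<pi> 1))"
proof -
  define c' where "c' = Transposition.transpose 0 a c"
  define \<sigma> where "\<sigma> = Transposition.transpose 0 a \<circ> Transposition.transpose 1 c'"
  have c'lt: "c' < b" using ab unfolding c'_def by (auto simp: Transposition.transpose_def)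
  have c'0: "c' \<noteq> 0" using ab unfolding c'_def by (auto simp: Transposition.transpose_def)
  have s: "\<sigma> permutes {..<b}" unfolding \<sigma>_def
    using ab c'lt by (intro permutes_compose permutes_swap_id) auto
  have s0: "\<sigma> 0 = a" using c'0 by (simp add: \<sigma>_def Transposition.transpose_def)
  have s1: "\<sigma> 1 = c" "\<sigma> (Suc 0) = c" by (simp_all add: \<sigma>_def c'_def Transposition.transpose_def)
  have "(\<Sum>\<pi>\<in>{\<pi>. \<pi> permutes {..<b}}. f (\<pi> 0) (\<pi> 1)) = (\<Sum>\<pi>\<in>{\<pi>. \<pi> permutes {..<b}}. (\<lambda>\<pi>. f (\<pi> 0) (\<pi> 1)) (\<pi> \<circ> \<sigma>))"
    by (rule perm_reindex[OF s, symmetric])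
  also have "\<dots> = (\<Sum>\<pi>\<in>{\<pi>. \<pi> permutes {..<b}}. f (\<pi> a) (\<pi> c))" by (simp add: s0 s1)
  finally show ?thesis ..
qed

lemma perm_avg:
  fixes f :: "nat \<Rightarrow> nat \<Rightarrow> real"
  assumes b2: "b \<ge> 2" and diag: "\<And>i. f i i = 0"
  shows "(\<Sum>\<pi>\<in>{\<pi>. \<pi> permutes {..<b}}. (1/real (b div 2)) * (\<Sum>j<b div 2. f (\<pi> j) (\<pi> (j + b div 2))))
            / real (card {\<pi>. \<pi> permutes {..<b}})
         = (\<Sum>i<b. \<Sum>k<b. f i k) / (real b * (real b - 1))"
proof -
  define m where "m = b div 2"
  define Pe where "Pe = {\<pi>. \<pi> permutes {..<b}}"
  define S0 where "S0 = (\<Sum>\<pi>\<in>Pe. f (\<pi> 0) (\<pi> 1))"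
  have fin: "finite Pe" unfolding Pe_def by (rule finite_permutations) simp
  have idP: "id \<in> Pe" unfolding Pe_def by (simp add: permutes_id)
  have cpos: "card Pe > 0" using fin idP by (auto simp: card_gt_0_iff)
  have mpos: "m > 0" "2 * m \<le> b" using b2 unfolding m_def by auto
  have L: "(\<Sum>\<pi>\<in>Pe. (1/real m) * (\<Sum>j<m. f (\<pi> j) (\<pi> (j + m)))) = S0"
  proof -
    have "(\<Sum>\<pi>\<in>Pe. (1/real m) * (\<Sum>j<m. f (\<pi> j) (\<pi> (j + m))))
        = (1/real m) * (\<Sum>j<m. \<Sum>\<pi>\<in>Pe. f (\<pi> j) (\<pi> (j + m)))"
      unfolding sum_distrib_left[symmetric] by (rule arg_cong[where f="\<lambda>x. _ * x"], rule sum.swap)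
    also have "\<dots> = (1/real m) * (\<Sum>j<m. S0)"
      unfolding S0_def Pe_def using mpos by (intro arg_cong[where f="\<lambda>x. _ * x"] sum.cong refl perm_pair_sum) auto
    finally show ?thesis using mpos by simp
  qed
  have R1: "(\<Sum>\<pi>\<in>Pe. \<Sum>a<b. \<Sum>c<b. f (\<pi> a) (\<pi> c)) = real (card Pe) * (\<Sum>i<b. \<Sum>k<b. f i k)"
  proof -
    have "(\<Sum>a<b. \<Sum>c<b. f (\<pi> a) (\<pi> c)) = (\<Sum>i<b. \<Sum>k<b. f i k)" if "\<pi> \<in> Pe" for \<pi>
    proof -
      have p: "\<pi> permutes {..<b}" using that Pe_def by simp
      have "(\<Sum>i<b. \<Sum>k<b. f i k) = (\<Sum>i<b. \<Sum>k<b. f (\<pi> i) k)"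
        using sum.permute[OF p, of "\<lambda>i. \<Sum>k<b. f i k"] by (simp add: o_def)
      also have "\<dots> = (\<Sum>i<b. \<Sum>k<b. f (\<pi> i) (\<pi> k))"
        by (rule sum.cong[OF refl], subst sum.permute[OF p], simp add: o_def)
      finally show ?thesis ..
    qed
    then show ?thesis by simp
  qed
  have R2: "(\<Sum>\<pi>\<in>Pe. \<Sum>a<b. \<Sum>c<b. f (\<pi> a) (\<pi> c)) = real b * (real b - 1) * S0"
  proof -
    have "(\<Sum>\<pi>\<in>Pe. \<Sum>a<b. \<Sum>c<b. f (\<pi> a) (\<pi> c)) = (\<Sum>a<b. \<Sum>c<b. \<Sum>\<pi>\<in>Pe. f (\<pi> a) (\<pi> c))"
      by (simp add: sum.swap[of _ Pe])
    also have "\<dots> = (\<Sum>a<b. \<Sum>c<b. S0 - (if a = c then S0 else 0))"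
    proof (intro sum.cong refl)
      fix a c assume "a \<in> {..<b}" "c \<in> {..<b}"
      then show "(\<Sum>\<pi>\<in>Pe. f (\<pi> a) (\<pi> c)) = S0 - (if a = c then S0 else 0)"
        unfolding S0_def Pe_def using perm_pair_sum[of a b c f] by (cases "a = c") (simp_all add: diag)
    qed
    also have "\<dots> = (\<Sum>a<b. real b * S0 - S0)"
      by (intro sum.cong refl) (simp add: sum_subtractf)
    also have "\<dots> = real b * (real b - 1) * S0" by (simp add: algebra_simps)
    finally show ?thesis .
  qed
  have bb: "real b * (real b - 1) > 0" using b2 by simp
  have e: "real b * (real b - 1) * S0 = real (card Pe) * (\<Sum>i<b. \<Sum>k<b. f i k)"
    using R1 R2 by simp
  have "S0 / real (card Pe) = (real b * (real b - 1) * S0) / (real b * (real b - 1) * real (card Pe))"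
    using bb cpos b2 by simp
  also have "\<dots> = (\<Sum>i<b. \<Sum>k<b. f i k) / (real b * (real b - 1))"
    unfolding e using cpos by simp
  finally show ?thesis
    unfolding m_def[symmetric] Pe_def[symmetric] L .
qed

lemma exp_avg_le:
  fixes x :: "'a \<Rightarrow> real"
  assumes "finite S" "S \<noteq> {}"
  shows "exp ((\<Sum>s\<in>S. x s) / real (card S)) \<le> (\<Sum>s\<in>S. exp (x s)) / real (card S)"
proof -
  define a where "a = (\<Sum>s\<in>S. x s) / real (card S)"
  have c: "real (card S) > 0" using assms by (simp add: card_gt_0_iff)
  have "exp a * (1 + (x s - a)) \<le> exp (x s)" for s
  proof -
    have "exp a * (1 + (x s - a)) \<le> exp a * exp (x s - a)"
      by (intro mult_left_mono) (auto simp: exp_ge_add_one_self)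
    then show ?thesis by (simp add: exp_diff)
  qed
  then have "(\<Sum>s\<in>S. exp a * (1 + (x s - a))) \<le> (\<Sum>s\<in>S. exp (x s))"
    by (intro sum_mono)
  moreover have "(\<Sum>s\<in>S. exp a * (1 + (x s - a))) = exp a * real (card S)"
    using c by (simp add: sum_distrib_left[symmetric] sum.distrib sum_subtractf a_def)
  ultimately show ?thesis using c unfolding a_def[symmetric] by (simp add: field_simps)
qed


lemma meas_comp_vspace: "(\<lambda>x. x j) \<in> borel_measurable (vspace d)"
proof (cases "j < d")
  case True then show ?thesis unfolding vspace_def by (intro measurable_component_singleton) auto
next
  case False
  have "(\<lambda>x. undefined) \<in> borel_measurable (vspace d)" by simp
  then show ?thesis
    by (rule measurable_cong[THEN iffD1, rotated])
       (use False in \<open>auto simp: vspace_def space_PiM PiE_def extensional_def\<close>)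
qed

locale vset =
  fixes d :: nat and P :: "(nat \<Rightarrow> real) measure" and R :: real
  assumes prob: "prob_space P" and sets_P: "sets P = sets (vspace d)"
  and int_coord: "\<forall>j<d. integrable P (\<lambda>x. x j)" and Rpos: "R > 0"
  and tail: "\<forall>t\<ge>0. measure P {x \<in> space P. vnorm d (centered d P x) \<ge> t} \<le> 2 * exp (- (t\<^sup>2 / (2 * R\<^sup>2)))"
  and intW0: "integrable P (\<lambda>x. (vnorm d (centered d P x))\<^sup>2)"
  and spos: "sigma_sq d P > 0"
begin

sublocale prob_space P by (rule prob)

lemma meas_comp[measurable]: "(\<lambda>x. x j) \<in> borel_measurable P"
  using meas_comp_vspace measurable_cong_sets[OF sets_P refl] by blast

definition W :: "(nat \<Rightarrow> real) \<Rightarrow> real" where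
  "W x = (\<Sum>j<d. (x j - mean_vec d P j)\<^sup>2)"

lemma W_meas[measurable]: "W \<in> borel_measurable P"
  unfolding W_def by measurable

lemma W_nonneg: "W x \<ge> 0" unfolding W_def by (simp add: sum_nonneg)

lemma W_eq: "(vnorm d (centered d P x))\<^sup>2 = W x"
  unfolding vnorm_sq W_def centered_def by simp

lemma vnorm_W: "vnorm d (centered d P x) = sqrt (W x)"
  unfolding W_def vnorm_def centered_def by simp

lemma intW: "integrable P W"
  using intW0 unfolding W_eq .

definition s2 where "s2 = sigma_sq d P"

lemma s2_eq: "s2 = (\<integral>x. W x \<partial>P)"
  unfolding s2_def sigma_sq_def W_eq ..

lemma s2_pos: "s2 > 0" using spos s2_def by simp

lemma tail_W: "emeasure P {x \<in> space P. 4 * R\<^sup>2 * real k \<le> W x} \<le> ennreal (2 * exp (- 2 * real k))"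
proof -
  define t where "t = 2 * R * sqrt (real k)"
  have t0: "t \<ge> 0" unfolding t_def using Rpos by simp
  have tt: "t\<^sup>2 = 4 * R\<^sup>2 * real k" unfolding t_def by (simp add: power_mult_distrib)
  have set: "{x \<in> space P. 4 * R\<^sup>2 * real k \<le> W x} = {x \<in> space P. vnorm d (centered d P x) \<ge> t}"
  proof -
    have "4 * R\<^sup>2 * real k \<le> W x \<longleftrightarrow> t \<le> sqrt (W x)" for x
    proof -
      have "t \<le> sqrt (W x) \<longleftrightarrow> sqrt (t\<^sup>2) \<le> sqrt (W x)" using t0 by simp
      also have "\<dots> \<longleftrightarrow> t\<^sup>2 \<le> W x" by (rule real_sqrt_le_iff)
      finally show ?thesis using tt by simp
    qed
    then show ?thesis by (simp add: vnorm_W)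
  qed
  have e: "- (t\<^sup>2 / (2 * R\<^sup>2)) = - 2 * real k" using Rpos by (simp add: tt field_simps)
  have "measure P {x \<in> space P. vnorm d (centered d P x) \<ge> t} \<le> 2 * exp (- 2 * real k)"
    using tail t0 e by metis
  then show ?thesis unfolding set by (simp add: emeasure_eq_measure ennreal_leI)
qed

definition a0 where "a0 = 1 / (4 * R\<^sup>2)"

lemma a0_pos: "a0 > 0" unfolding a0_def using Rpos by simp

lemma exp_pointwise:
  assumes w: "w \<ge> 0"
  shows "ennreal (exp (a0 * w)) \<le> 1 + (\<Sum>k. ennreal (exp (real k + 1) - exp (real k)) * indicator {w'. 4 * R\<^sup>2 * real k \<le> w'} w)"
proof -
  define n where "n = nat \<lfloor>w / (4 * R\<^sup>2)\<rfloor>"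
  have R2: "4 * R\<^sup>2 > 0" using Rpos by simp
  have wn: "w / (4 * R\<^sup>2) < real n + 1" unfolding n_def using w R2 by linarith
  have in1: "4 * R\<^sup>2 * real k \<le> w" if "k < Suc n" for k
  proof -
    have "real k \<le> real n" using that by simp
    also have "real n \<le> w / (4 * R\<^sup>2)" unfolding n_def using w R2 by simp
    finally show ?thesis using R2 by (simp add: field_simps)
  qed
  have out: "\<not> 4 * R\<^sup>2 * real k \<le> w" if "k \<notin> {..<Suc n}" for k
  proof -
    have "real n + 1 \<le> real k" using that by simp
    then have "w / (4 * R\<^sup>2) < real k" using wn by linarith
    then show ?thesis using R2 by (simp add: field_simps)
  qed
  have "(\<Sum>k. ennreal (exp (real k + 1) - exp (real k)) * indicator {w'. 4 * R\<^sup>2 * real k \<le> w'} w)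
      = (\<Sum>k<Suc n. ennreal (exp (real k + 1) - exp (real k)) * indicator {w'. 4 * R\<^sup>2 * real k \<le> w'} w)"
    by (rule suminf_finite) (use out in auto)
  also have "\<dots> = (\<Sum>k<Suc n. ennreal (exp (real (Suc k)) - exp (real k)))"
    by (rule sum.cong) (use in1 in auto)
  also have "\<dots> = ennreal (\<Sum>k<Suc n. exp (real (Suc k)) - exp (real k))"
    by (rule sum_ennreal) simp
  also have "(\<Sum>k<Suc n. exp (real (Suc k)) - exp (real k)) = exp (real (Suc n)) - 1"
    using sum_lessThan_telescope[of "\<lambda>k. exp (real k)" "Suc n"] by simp
  finally have S: "(\<Sum>k. ennreal (exp (real k + 1) - exp (real k)) * indicator {w'. 4 * R\<^sup>2 * real k \<le> w'} w) = ennreal (exp (real (Suc n)) - 1)" .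
  have "exp (a0 * w) \<le> exp (real (Suc n))" unfolding a0_def using wn by simp
  then have "ennreal (exp (a0 * w)) \<le> ennreal (1 + (exp (real (Suc n)) - 1))" by (simp add: ennreal_leI)
  also have "\<dots> = 1 + ennreal (exp (real (Suc n)) - 1)" by (subst ennreal_plus) auto
  finally show ?thesis unfolding S .
qed

lemma mgf_W: "(\<integral>\<^sup>+x. ennreal (exp (a0 * W x)) \<partial>P) \<le> ennreal (1 + 2 * exp 1)"
proof -
  define A where "A k = {x \<in> space P. 4 * R\<^sup>2 * real k \<le> W x}" for k :: nat
  have A_meas[measurable]: "A k \<in> sets P" for k unfolding A_def by measurable
  have "(\<integral>\<^sup>+x. ennreal (exp (a0 * W x)) \<partial>P)
     \<le> (\<integral>\<^sup>+x. 1 + (\<Sum>k. ennreal (exp (real k + 1) - exp (real k)) * indicator (A k) x) \<partial>P)"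
  proof (rule nn_integral_mono)
    fix x assume x: "x \<in> space P"
    have "indicator {w'. 4 * R\<^sup>2 * real k \<le> w'} (W x) = (indicator (A k) x :: ennreal)" for k
      using x by (simp add: A_def indicator_def)
    then show "ennreal (exp (a0 * W x)) \<le> 1 + (\<Sum>k. ennreal (exp (real k + 1) - exp (real k)) * indicator (A k) x)"
      using exp_pointwise[OF W_nonneg[of x]] by simp
  qed
  also have "\<dots> = 1 + (\<Sum>k. ennreal (exp (real k + 1) - exp (real k)) * emeasure P (A k))"
    by (subst nn_integral_add) (auto simp: nn_integral_suminf nn_integral_cmult_indicator emeasure_space_1)
  also have "\<dots> \<le> 1 + (\<Sum>k. ennreal (2 * (exp 1 - 1) * (exp (-1)) ^ k))"
  proof -
    have "ennreal (exp (real k + 1) - exp (real k)) * emeasure P (A k) \<le> ennreal (2 * (exp 1 - 1) * (exp (-1)) ^ k)" for k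
    proof -
      have "ennreal (exp (real k + 1) - exp (real k)) * emeasure P (A k)
          \<le> ennreal (exp (real k + 1) - exp (real k)) * ennreal (2 * exp (- 2 * real k))"
        by (intro mult_left_mono) (use tail_W[of k] in \<open>auto simp: A_def\<close>)
      also have "\<dots> = ennreal ((exp (real k + 1) - exp (real k)) * (2 * exp (- 2 * real k)))"
        by (subst ennreal_mult) auto
      also have "(exp (real k + 1) - exp (real k)) * (2 * exp (- 2 * real k)) = 2 * (exp 1 - 1) * (exp (-1)) ^ k"
      proof -
        have "exp (real k + 1) = exp 1 * exp (real k)" by (simp add: exp_add)
        moreover have "exp (- 2 * real k) = exp (- real k) * exp (- real k)" by (simp flip: exp_add)
        moreover have "exp (real k) * exp (- real k) = 1" by (simp flip: exp_add)
        moreover have "(exp (-1)) ^ k = exp (- real k)" by (simp add: exp_of_nat_mult[symmetric])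
        ultimately show ?thesis by (simp add: algebra_simps)
      qed
      finally show ?thesis .
    qed
    then show ?thesis by (intro add_left_mono suminf_le) auto
  qed
  also have "(\<Sum>k. ennreal (2 * (exp 1 - 1) * (exp (-1)) ^ k)) = ennreal (2 * (exp 1 - 1) * (1 / (1 - exp (-1))))"
  proof (rule suminf_ennreal_eq)
    show "\<And>i. (0::real) \<le> 2 * (exp 1 - 1) * (exp (-1)) ^ i"
      using exp_ge_add_one_self[of "1::real"] by (intro mult_nonneg_nonneg) auto
    have "(\<lambda>k. exp (-1::real) ^ k) sums (1 / (1 - exp (-1)))" by (rule geometric_sums) simp
    then show "(\<lambda>i. 2 * (exp 1 - 1) * exp (- 1) ^ i) sums (2 * (exp 1 - 1) * (1 / (1 - exp (- 1::real))))"
      by (rule sums_mult)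
  qed
  also have "2 * (exp 1 - 1) * (1 / (1 - exp (-1::real))) = 2 * exp 1"
  proof -
    have "exp (-1::real) = 1 / exp 1" by (simp add: exp_minus field_simps)
    moreover have "exp (1::real) > 1" by simp
    ultimately show ?thesis by (simp add: field_simps)
  qed
  also have "1 + ennreal (2 * exp 1) = ennreal (1 + 2 * exp 1)" by (subst ennreal_plus) auto
  finally show ?thesis .
qed

end


lemma sq_le_2exp:
  fixes y :: real assumes "y \<ge> 0" shows "y\<^sup>2 \<le> 2 * exp y"
proof -
  obtain t where "exp y = (\<Sum>m<3. y ^ m / fact m) + exp t / fact 3 * y ^ 3"
    using Maclaurin_exp_le[of y 3] by blast
  moreover have "exp t / fact 3 * y ^ 3 \<ge> 0" using assms by simp
  moreover have "(\<Sum>m<3. y ^ m / fact m) = 1 + y + y\<^sup>2 / 2"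
    by (simp add: numeral_3_eq_3 power2_eq_square)
  ultimately show ?thesis using assms by simp
qed

lemma sq_diff_le: fixes u v :: real shows "(u - v)\<^sup>2 \<le> 2 * (u\<^sup>2 + v\<^sup>2)"
proof -
  have "0 \<le> (u + v)\<^sup>2" by simp
  then show ?thesis by (simp add: power2_diff power2_sum)
qed

lemma exp_quad_bound:
  fixes \<mu> m0 X :: real
  assumes m0: "m0 > 0" and mu: "\<bar>\<mu>\<bar> \<le> m0 / 2"
  shows "exp (\<mu> * X) \<le> 1 + \<mu> * X + 4 * \<mu>\<^sup>2 / m0\<^sup>2 * exp (m0 * \<bar>X\<bar>)"
proof -
  obtain t where t: "\<bar>t\<bar> \<le> \<bar>\<mu> * X\<bar>" and e: "exp (\<mu> * X) = (\<Sum>m<2. (\<mu> * X) ^ m / fact m) + exp t / fact 2 * (\<mu> * X) ^ 2"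
    using Maclaurin_exp_le[of "\<mu> * X" 2] by blast
  have e2: "exp (\<mu> * X) = 1 + \<mu> * X + exp t / 2 * (\<mu> * X)\<^sup>2"
    using e by (simp add: numeral_2_eq_2)
  define y where "y = m0 * \<bar>X\<bar> / 2"
  have y0: "y \<ge> 0" unfolding y_def using m0 by simp
  have "\<bar>\<mu> * X\<bar> \<le> y" unfolding y_def abs_mult using mu
    by (metis abs_ge_zero mult.commute mult_right_mono times_divide_eq_left)
  then have et: "exp t \<le> exp y" using t by simp
  have X2: "X\<^sup>2 = 4 * y\<^sup>2 / m0\<^sup>2" unfolding y_def using m0 by (simp add: power2_eq_square field_simps)
  have "exp t / 2 * (\<mu> * X)\<^sup>2 \<le> exp y / 2 * (\<mu> * X)\<^sup>2"
    by (rule mult_right_mono) (use et in auto)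
  also have "\<dots> = exp y / 2 * (\<mu>\<^sup>2 * X\<^sup>2)" by (simp add: power_mult_distrib)
  also have "\<dots> = 2 * \<mu>\<^sup>2 / m0\<^sup>2 * (exp y * y\<^sup>2)" unfolding X2 by (simp add: field_simps)
  also have "\<dots> \<le> 2 * \<mu>\<^sup>2 / m0\<^sup>2 * (exp y * (2 * exp y))"
    using sq_le_2exp[OF y0] by (intro mult_left_mono) auto
  also have "\<dots> = 4 * (\<mu>\<^sup>2 / m0\<^sup>2) * (exp y * exp y)" by (simp add: algebra_simps)
  also have "exp y * exp y = exp (m0 * \<bar>X\<bar>)"
  proof -
    have "m0 * \<bar>X\<bar> = y + y" unfolding y_def by simp
    then show ?thesis by (simp only: exp_add)
  qed
  finally show ?thesis unfolding e2 by simp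
qed

context vset begin

lemma Hk_meas[measurable]:
  assumes [measurable]: "f \<in> measurable N P" "g \<in> measurable N P"
  shows "(\<lambda>x. Hk d (f x) (g x)) \<in> borel_measurable N"
  unfolding Hk_def by measurable

definition K0 where "K0 = (\<integral>x. exp (a0 * W x) \<partial>P)"

lemma int_expW: "integrable P (\<lambda>x. exp (a0 * W x))"
  by (rule integrableI_nonneg) (use mgf_W in \<open>auto simp: less_top[symmetric] top_unique ennreal_le_iff\<close>)

lemma K0_le: "K0 \<le> 1 + 2 * exp 1"
proof -
  have "ennreal K0 = (\<integral>\<^sup>+x. ennreal (exp (a0 * W x)) \<partial>P)"
    unfolding K0_def by (rule nn_integral_eq_integral[symmetric]) (auto intro: int_expW)
  with mgf_W have 1: "ennreal K0 \<le> ennreal (1 + 2 * exp 1)" by simp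
  have "0 \<le> 1 + 2 * exp (1::real)" by (simp add: add_nonneg_nonneg)
  from iffD1[OF ennreal_le_iff[OF this] 1] show ?thesis .
qed

lemma K0_nonneg: "K0 \<ge> 0" unfolding K0_def by simp

lemma s2_le: "a0 * s2 \<le> K0"
proof -
  have "a0 * s2 = (\<integral>x. a0 * W x \<partial>P)" unfolding s2_eq by simp
  also have "\<dots> \<le> K0" unfolding K0_def
  proof (rule integral_mono)
    show "integrable P (\<lambda>x. a0 * W x)" using intW by simp
    show "integrable P (\<lambda>x. exp (a0 * W x))" by (rule int_expW)
    fix x show "a0 * W x \<le> exp (a0 * W x)" using exp_ge_add_one_self[of "a0 * W x"] by linarith
  qed
  finally show ?thesis .
qed

lemma mean_eq: "j < d \<Longrightarrow> mean_vec d P j = (\<integral>x. x j \<partial>P)"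
  unfolding mean_vec_def by simp

lemma int_z: "j < d \<Longrightarrow> integrable P (\<lambda>x. x j - mean_vec d P j)"
  using int_coord by simp

lemma int_z2: "j < d \<Longrightarrow> integrable P (\<lambda>x. (x j - mean_vec d P j)\<^sup>2)"
proof (rule Bochner_Integration.integrable_bound[OF intW])
  assume j: "j < d"
  show "(\<lambda>x. (x j - mean_vec d P j)\<^sup>2) \<in> borel_measurable P" by measurable
  show "AE x in P. norm ((x j - mean_vec d P j)\<^sup>2) \<le> norm (W x)"
  proof (rule AE_I2)
    fix x
    have "(x j - mean_vec d P j)\<^sup>2 \<le> W x" unfolding W_def
      by (rule member_le_sum[of j "{..<d}" "\<lambda>j. (x j - mean_vec d P j)\<^sup>2"]) (use j in auto)
    then show "norm ((x j - mean_vec d P j)\<^sup>2) \<le> norm (W x)" using W_nonneg[of x] by simp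
  qed
qed

lemma mean_z: "j < d \<Longrightarrow> (\<integral>x. x j - mean_vec d P j \<partial>P) = 0"
  using int_coord prob_space by (simp add: mean_eq)

lemma Hk_expand: "Hk d y y' = W y / 2 + W y' / 2 - (\<Sum>j<d. (y j - mean_vec d P j) * (y' j - mean_vec d P j))"
proof -
  have "(y j - y' j)\<^sup>2 = (y j - mean_vec d P j)\<^sup>2 + (y' j - mean_vec d P j)\<^sup>2 - 2 * ((y j - mean_vec d P j) * (y' j - mean_vec d P j))" for j
    by (simp add: power2_eq_square algebra_simps)
  then show ?thesis unfolding Hk_def W_def
    by (simp add: sum.distrib sum_subtractf sum_distrib_left[symmetric] add_divide_distrib diff_divide_distrib)
qed

lemma Hk_nonneg: "Hk d y y' \<ge> 0" unfolding Hk_def by (simp add: sum_nonneg)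

lemma Hk_le: "Hk d y y' \<le> W y + W y'"
proof -
  have "(y j - y' j)\<^sup>2 / 2 \<le> (y j - mean_vec d P j)\<^sup>2 + (y' j - mean_vec d P j)\<^sup>2" for j
  proof -
    have "(y j - y' j)\<^sup>2 = ((y j - mean_vec d P j) - (y' j - mean_vec d P j))\<^sup>2" by simp
    also have "\<dots> \<le> 2 * ((y j - mean_vec d P j)\<^sup>2 + (y' j - mean_vec d P j)\<^sup>2)"
      by (rule sq_diff_le)
    finally show ?thesis by simp
  qed
  then have "(\<Sum>j<d. (y j - y' j)\<^sup>2 / 2) \<le> (\<Sum>j<d. (y j - mean_vec d P j)\<^sup>2 + (y' j - mean_vec d P j)\<^sup>2)"
    by (intro sum_mono)
  then show ?thesis unfolding Hk_def W_def by (simp add: sum.distrib sum_divide_distrib)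
qed

lemma int_cross: "integrable P (\<lambda>y. \<Sum>j<d. (y j - mean_vec d P j) * c j)"
  by (rule Bochner_Integration.integrable_sum, rule integrable_mult_left, rule int_z) auto

lemma int_Hk: "integrable P (\<lambda>y. Hk d y y')"
proof -
  have "integrable P (\<lambda>y. W y / 2 + W y' / 2 - (\<Sum>j<d. (y j - mean_vec d P j) * (y' j - mean_vec d P j)))"
    using intW int_cross by (intro Bochner_Integration.integrable_diff Bochner_Integration.integrable_add) auto
  then show ?thesis unfolding Hk_expand .
qed

lemma integral_Hk: "(\<integral>y. Hk d y y' \<partial>P) = s2 / 2 + W y' / 2"
proof -
  have i1: "integrable P (\<lambda>y. W y / 2 + W y' / 2)" using intW by auto
  have i2: "integrable P (\<lambda>y. (\<Sum>j<d. (y j - mean_vec d P j) * (y' j - mean_vec d P j)))"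
    by (rule int_cross)
  have "(\<integral>y. Hk d y y' \<partial>P) = (\<integral>y. W y / 2 + W y' / 2 \<partial>P) - (\<integral>y. (\<Sum>j<d. (y j - mean_vec d P j) * (y' j - mean_vec d P j)) \<partial>P)"
    unfolding Hk_expand by (rule Bochner_Integration.integral_diff[OF i1 i2])
  also have "(\<integral>y. W y / 2 + W y' / 2 \<partial>P) = s2 / 2 + W y' / 2"
    using intW prob_space by (simp add: s2_eq)
  also have "(\<integral>y. (\<Sum>j<d. (y j - mean_vec d P j) * (y' j - mean_vec d P j)) \<partial>P) = 0"
  proof -
    have "(\<integral>y. (\<Sum>j<d. (y j - mean_vec d P j) * (y' j - mean_vec d P j)) \<partial>P)
        = (\<Sum>j<d. (\<integral>y. (y j - mean_vec d P j) * (y' j - mean_vec d P j) \<partial>P))"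
      by (rule Bochner_Integration.integral_sum, rule integrable_mult_left, rule int_z) auto
    also have "\<dots> = 0" using mean_z by simp
    finally show ?thesis .
  qed
  finally show ?thesis by simp
qed

end


context vset begin

definition kap :: real where "kap = 64 * exp (1 + 2 * exp 1) * (1 + 2 * exp 1)\<^sup>2"

lemma kap_pos: "kap > 0"
proof -
  have "0 < 1 + 2 * exp (1::real)" by (simp add: add_pos_nonneg)
  then show ?thesis unfolding kap_def by simp
qed

lemma mgf_pair:
  assumes mu: "\<bar>\<mu>\<bar> \<le> a0 / 2"
  shows "(\<integral>\<^sup>+y'. (\<integral>\<^sup>+y. ennreal (exp (\<mu> * (Hk d y y' - s2))) \<partial>P) \<partial>P) \<le> ennreal (exp (kap * R ^ 4 * \<mu>\<^sup>2))"
proof -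
  define c1 where "c1 = 4 * \<mu>\<^sup>2 / a0\<^sup>2 * exp (a0 * s2)"
  have c1: "c1 \<ge> 0" unfolding c1_def by simp
  define RH where "RH y y' = 1 + \<mu> * (Hk d y y' - s2) + c1 * (exp (a0 * W y) * exp (a0 * W y'))" for y y'
  define G where "G y' = 1 + \<mu> * ((W y' - s2) / 2) + c1 * (K0 * exp (a0 * W y'))" for y'
  have pw: "exp (\<mu> * (Hk d y y' - s2)) \<le> RH y y'" for y y'
  proof -
    have b: "exp (\<mu> * (Hk d y y' - s2)) \<le> 1 + \<mu> * (Hk d y y' - s2) + 4 * \<mu>\<^sup>2 / a0\<^sup>2 * exp (a0 * \<bar>Hk d y y' - s2\<bar>)"
      by (rule exp_quad_bound[OF a0_pos mu])
    have "\<bar>Hk d y y' - s2\<bar> \<le> s2 + W y + W y'"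
      using Hk_nonneg[of y y'] Hk_le[of y y'] s2_pos W_nonneg[of y] W_nonneg[of y'] by linarith
    then have "a0 * \<bar>Hk d y y' - s2\<bar> \<le> a0 * s2 + a0 * W y + a0 * W y'"
      using a0_pos by (simp add: distrib_left[symmetric])
    then have "exp (a0 * \<bar>Hk d y y' - s2\<bar>) \<le> exp (a0 * s2) * (exp (a0 * W y) * exp (a0 * W y'))"
      by (simp add: exp_add[symmetric] add.assoc)
    then have "4 * \<mu>\<^sup>2 / a0\<^sup>2 * exp (a0 * \<bar>Hk d y y' - s2\<bar>) \<le> 4 * \<mu>\<^sup>2 / a0\<^sup>2 * (exp (a0 * s2) * (exp (a0 * W y) * exp (a0 * W y')))"
      by (intro mult_left_mono) auto
    also have "\<dots> = c1 * (exp (a0 * W y) * exp (a0 * W y'))" unfolding c1_def by simp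
    finally show ?thesis using b unfolding RH_def by linarith
  qed
  have RH_pos: "RH y y' \<ge> 0" for y y' using pw[of y y'] exp_gt_zero[of "\<mu> * (Hk d y y' - s2)"] by linarith
  have intRH: "integrable P (\<lambda>y. RH y y')" for y'
    unfolding RH_def using int_Hk[of y'] int_expW
    by (intro Bochner_Integration.integrable_add Bochner_Integration.integrable_diff integrable_mult_right integrable_mult_left integrable_const) auto
  have intRH_eq: "(\<integral>y. RH y y' \<partial>P) = G y'" for y'
  proof -
    have "(\<integral>y. RH y y' \<partial>P) = (\<integral>y. 1 + \<mu> * (Hk d y y' - s2) \<partial>P) + (\<integral>y. c1 * (exp (a0 * W y) * exp (a0 * W y')) \<partial>P)"
      unfolding RH_def using int_Hk[of y'] int_expW
      by (intro Bochner_Integration.integral_add Bochner_Integration.integrable_add Bochner_Integration.integrable_diff integrable_mult_right integrable_mult_left integrable_const) auto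
    also have "(\<integral>y. 1 + \<mu> * (Hk d y y' - s2) \<partial>P) = 1 + \<mu> * ((\<integral>y. Hk d y y' \<partial>P) - s2)"
      using int_Hk[of y'] prob_space by simp
    also have "(\<integral>y. c1 * (exp (a0 * W y) * exp (a0 * W y')) \<partial>P) = c1 * (K0 * exp (a0 * W y'))"
      unfolding K0_def by simp
    finally have "(\<integral>y. RH y y' \<partial>P) = 1 + \<mu> * ((s2 / 2 + W y' / 2) - s2) + c1 * (K0 * exp (a0 * W y'))"
      unfolding integral_Hk .
    moreover have "\<mu> * ((s2 / 2 + W y' / 2) - s2) = \<mu> * ((W y' - s2) / 2)" by (simp add: field_simps)
    ultimately show ?thesis unfolding G_def by simp
  qed
  have G_pos: "G y' \<ge> 0" for y'
    using Bochner_Integration.integral_nonneg[of P "\<lambda>y. RH y y'"] RH_pos intRH_eq by auto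
  have inner: "(\<integral>\<^sup>+y. ennreal (exp (\<mu> * (Hk d y y' - s2))) \<partial>P) \<le> ennreal (G y')" for y'
  proof -
    have "(\<integral>\<^sup>+y. ennreal (exp (\<mu> * (Hk d y y' - s2))) \<partial>P) \<le> (\<integral>\<^sup>+y. ennreal (RH y y') \<partial>P)"
      by (intro nn_integral_mono ennreal_leI pw)
    also have "\<dots> = ennreal (\<integral>y. RH y y' \<partial>P)"
      by (rule nn_integral_eq_integral[OF intRH]) (use RH_pos in auto)
    finally show ?thesis unfolding intRH_eq .
  qed
  have intG: "integrable P G"
    unfolding G_def using intW int_expW
    by (intro Bochner_Integration.integrable_add Bochner_Integration.integrable_diff integrable_mult_right integrable_mult_left integrable_const integrable_divide_zero) auto
  have intG_eq: "(\<integral>y'. G y' \<partial>P) = 1 + c1 * K0\<^sup>2"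
  proof -
    have "(\<integral>y'. G y' \<partial>P) = (\<integral>y'. 1 + \<mu> * ((W y' - s2) / 2) \<partial>P) + (\<integral>y'. c1 * (K0 * exp (a0 * W y')) \<partial>P)"
      unfolding G_def using intW int_expW
      by (intro Bochner_Integration.integral_add Bochner_Integration.integrable_add Bochner_Integration.integrable_diff integrable_mult_right integrable_mult_left integrable_const integrable_divide_zero) auto
    also have "(\<integral>y'. 1 + \<mu> * ((W y' - s2) / 2) \<partial>P) = 1"
      using intW prob_space by (simp add: s2_eq)
    also have "(\<integral>y'. c1 * (K0 * exp (a0 * W y')) \<partial>P) = c1 * K0\<^sup>2"
      unfolding K0_def[symmetric] by (simp add: power2_eq_square K0_def)
    finally show ?thesis .
  qed
  have "(\<integral>\<^sup>+y'. (\<integral>\<^sup>+y. ennreal (exp (\<mu> * (Hk d y y' - s2))) \<partial>P) \<partial>P) \<le> (\<integral>\<^sup>+y'. ennreal (G y') \<partial>P)"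
    by (intro nn_integral_mono inner)
  also have "\<dots> = ennreal (1 + c1 * K0\<^sup>2)"
    by (subst nn_integral_eq_integral[OF intG]) (use G_pos intG_eq in auto)
  also have "\<dots> \<le> ennreal (exp (kap * R ^ 4 * \<mu>\<^sup>2))"
  proof (rule ennreal_leI)
    have "1 + c1 * K0\<^sup>2 \<le> exp (c1 * K0\<^sup>2)" by (rule exp_ge_add_one_self[unfolded add.commute[of _ 1]])
    also have "c1 * K0\<^sup>2 \<le> kap * R ^ 4 * \<mu>\<^sup>2"
    proof -
      have a: "4 / a0\<^sup>2 = 64 * R ^ 4" unfolding a0_def using Rpos by (simp add: field_simps power2_eq_square power4_eq_xxxx)
      have e: "exp (a0 * s2) \<le> exp (1 + 2 * exp 1)" using s2_le K0_le by simp
      have k: "K0\<^sup>2 \<le> (1 + 2 * exp 1)\<^sup>2" using K0_le K0_nonneg by (intro power_mono) auto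
      have "c1 * K0\<^sup>2 = (4 / a0\<^sup>2) * (\<mu>\<^sup>2 * (exp (a0 * s2) * K0\<^sup>2))"
        unfolding c1_def by (simp add: algebra_simps)
      also have "\<dots> = (64 * R ^ 4 * \<mu>\<^sup>2) * (exp (a0 * s2) * K0\<^sup>2)"
        unfolding a by (simp add: algebra_simps)
      also have "\<dots> \<le> (64 * R ^ 4 * \<mu>\<^sup>2) * (exp (1 + 2 * exp 1) * (1 + 2 * exp 1)\<^sup>2)"
        using e k by (intro mult_left_mono mult_mono) auto
      also have "\<dots> = kap * R ^ 4 * \<mu>\<^sup>2" unfolding kap_def by simp
      finally show ?thesis .
    qed
    then have "exp (c1 * K0\<^sup>2) \<le> exp (kap * R ^ 4 * \<mu>\<^sup>2)" by simp
    finally show "1 + c1 * K0\<^sup>2 \<le> exp (kap * R ^ 4 * \<mu>\<^sup>2)" .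
  qed
  finally show ?thesis .
qed

end


context vset begin

abbreviation Om :: "nat \<Rightarrow> (nat \<Rightarrow> nat \<Rightarrow> real) measure" where
  "Om b \<equiv> PiM {..<b} (\<lambda>_. P)"

lemma psf: "product_sigma_finite (\<lambda>_::nat. P)"
  unfolding product_sigma_finite_def by (auto intro: prob_space_imp_sigma_finite prob)

lemma pair_prod:
  fixes g :: "(nat \<Rightarrow> real) \<Rightarrow> (nat \<Rightarrow> real) \<Rightarrow> ennreal"
  assumes mb: "2 * m \<le> b"
    and g1: "\<And>c. (\<lambda>v. g v c) \<in> borel_measurable P"
    and gG: "(\<lambda>c. \<integral>\<^sup>+v. g v c \<partial>P) \<in> borel_measurable P"
    and gF: "(\<lambda>ys. \<Prod>j<m. g (ys j) (ys (j + m))) \<in> borel_measurable (Om b)"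
  shows "(\<integral>\<^sup>+ys. (\<Prod>j<m. g (ys j) (ys (j + m))) \<partial>Om b) = (\<integral>\<^sup>+y'. (\<integral>\<^sup>+y. g y y' \<partial>P) \<partial>P) ^ m"
proof -
  interpret PS: product_sigma_finite "\<lambda>_::nat. P" by (rule psf)
  define I where "I = {..<m}"
  define J where "J = {m..<b}"
  define G where "G c = (\<integral>\<^sup>+v. g v c \<partial>P)" for c
  have IJ: "J \<inter> I = {}" "finite J" "finite I" unfolding I_def J_def by auto
  have U: "{..<b} = J \<union> I" unfolding I_def J_def using mb by auto
  have "(\<integral>\<^sup>+ys. (\<Prod>j<m. g (ys j) (ys (j + m))) \<partial>Om b)
      = (\<integral>\<^sup>+x. (\<integral>\<^sup>+y. (\<Prod>j<m. g (merge J I (x, y) j) (merge J I (x, y) (j + m))) \<partial>PiM I (\<lambda>_. P)) \<partial>PiM J (\<lambda>_. P))"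
    using PS.product_nn_integral_fold[OF IJ, of "\<lambda>ys. \<Prod>j<m. g (ys j) (ys (j + m))"] gF unfolding U by simp
  also have "\<dots> = (\<integral>\<^sup>+x. (\<Prod>j<m. G (x (j + m))) \<partial>PiM J (\<lambda>_. P))"
  proof (rule nn_integral_cong)
    fix x
    have "(\<integral>\<^sup>+y. (\<Prod>j<m. g (merge J I (x, y) j) (merge J I (x, y) (j + m))) \<partial>PiM I (\<lambda>_. P))
        = (\<integral>\<^sup>+y. (\<Prod>j\<in>I. (\<lambda>v. g v (x (j + m))) (y j)) \<partial>PiM I (\<lambda>_. P))"
    proof (rule nn_integral_cong)
      fix y
      show "(\<Prod>j<m. g (merge J I (x, y) j) (merge J I (x, y) (j + m))) = (\<Prod>j\<in>I. (\<lambda>v. g v (x (j + m))) (y j))"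
        unfolding I_def by (rule prod.cong) (use mb in \<open>auto simp: merge_def J_def I_def\<close>)
    qed
    also have "\<dots> = (\<Prod>j\<in>I. G (x (j + m)))"
      unfolding G_def by (rule PS.product_nn_integral_prod) (use IJ g1 in auto)
    finally show "(\<integral>\<^sup>+y. (\<Prod>j<m. g (merge J I (x, y) j) (merge J I (x, y) (j + m))) \<partial>PiM I (\<lambda>_. P)) = (\<Prod>j<m. G (x (j + m)))"
      unfolding I_def .
  qed
  also have "\<dots> = (\<integral>\<^sup>+x. (\<Prod>k\<in>J. (\<lambda>v. if k < 2 * m then G v else 1) (x k)) \<partial>PiM J (\<lambda>_. P))"
  proof (rule nn_integral_cong)
    fix x :: "nat \<Rightarrow> nat \<Rightarrow> real"
    have "(\<Prod>k\<in>J. (\<lambda>v. if k < 2 * m then G v else 1) (x k)) = (\<Prod>k\<in>{k \<in> J. k < 2 * m}. G (x k))"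
      by (subst prod.inter_filter) (auto simp: J_def)
    also have "{k \<in> J. k < 2 * m} = {0 + m..<m + m}" unfolding J_def using mb by auto
    also have "(\<Prod>k\<in>{0 + m..<m + m}. G (x k)) = (\<Prod>j\<in>{0..<m}. G (x (j + m)))"
      by (rule prod.shift_bounds_nat_ivl)
    finally show "(\<Prod>j<m. G (x (j + m))) = (\<Prod>k\<in>J. (\<lambda>v. if k < 2 * m then G v else 1) (x k))"
      by (simp add: atLeast0LessThan)
  qed
  also have "\<dots> = (\<Prod>k\<in>J. integral\<^sup>N P (\<lambda>v. if k < 2 * m then G v else 1))"
  proof (rule PS.product_nn_integral_prod)
    have GM: "G \<in> borel_measurable P" using gG unfolding G_def .
    show "(\<lambda>v. if k < 2 * m then G v else 1) \<in> borel_measurable P" for k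
      by (cases "k < 2 * m") (simp_all add: GM)
  qed (use IJ in auto)
  also have "\<dots> = (\<Prod>k\<in>J. if k < 2 * m then integral\<^sup>N P G else 1)"
    by (rule prod.cong) (auto simp: emeasure_space_1)
  also have "\<dots> = (\<Prod>k\<in>{k \<in> J. k < 2 * m}. integral\<^sup>N P G)"
    by (subst prod.inter_filter) (auto simp: J_def)
  also have "{k \<in> J. k < 2 * m} = {m..<2 * m}" unfolding J_def using mb by auto
  also have "(\<Prod>k\<in>{m..<2 * m}. integral\<^sup>N P G) = integral\<^sup>N P G ^ m" by simp
  finally show ?thesis unfolding G_def .
qed

lemma reindex_meas:
  assumes "\<pi> permutes {..<b}"
  shows "(\<lambda>ys. \<lambda>i\<in>{..<b}. ys (\<pi> i)) \<in> measurable (Om b) (Om b)"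
proof (rule measurable_restrict)
  fix i assume "i \<in> {..<b}"
  then have "\<pi> i \<in> {..<b}" using permutes_in_image[OF assms, of i] by simp
  then show "(\<lambda>ys. ys (\<pi> i)) \<in> measurable (Om b) P" by (rule measurable_component_singleton)
qed

lemma perm_invariant:
  assumes p: "\<pi> permutes {..<b}" and F: "F \<in> borel_measurable (Om b)"
  shows "(\<integral>\<^sup>+ys. F (\<lambda>i\<in>{..<b}. ys (\<pi> i)) \<partial>Om b) = (\<integral>\<^sup>+ys. F ys \<partial>Om b)"
proof -
  have pi: "\<pi> \<in> {..<b} \<rightarrow> {..<b}" using permutes_in_image[OF p] by auto
  have d: "distr (Om b) (Om b) (\<lambda>ys. \<lambda>i\<in>{..<b}. ys (\<pi> i)) = Om b"
    using distr_PiM_reindex[of "{..<b}" "\<lambda>_. P" \<pi> "{..<b}"] p prob pi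
    by (auto simp: permutes_inj_on)
  have "(\<integral>\<^sup>+ys. F ys \<partial>Om b) = (\<integral>\<^sup>+ys. F ys \<partial>distr (Om b) (Om b) (\<lambda>ys. \<lambda>i\<in>{..<b}. ys (\<pi> i)))"
    unfolding d ..
  also have "\<dots> = (\<integral>\<^sup>+ys. F (\<lambda>i\<in>{..<b}. ys (\<pi> i)) \<partial>Om b)"
    by (rule nn_integral_distr[OF reindex_meas[OF p]]) (use F in simp)
  finally show ?thesis ..
qed

end


context vset begin

lemma comp_meas_Om[measurable]: "(\<lambda>ys. ys i j) \<in> borel_measurable (Om b)"
proof (cases "i < b")
  case True
  have "(\<lambda>ys. ys i) \<in> measurable (Om b) P" using True by (intro measurable_component_singleton) auto
  then show ?thesis using meas_comp[of j] by (rule measurable_compose)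
next
  case False
  have "(\<lambda>ys. undefined j) \<in> borel_measurable (Om b)" by simp
  then show ?thesis
    by (rule measurable_cong[THEN iffD1, rotated]) (use False in \<open>auto simp: space_PiM PiE_def extensional_def\<close>)
qed

definition Uf :: "nat \<Rightarrow> (nat \<Rightarrow> nat \<Rightarrow> real) \<Rightarrow> real" where
  "Uf b ys = (\<Sum>i<b. \<Sum>k<b. Hk d (ys i) (ys k)) / (real b * (real b - 1))"

definition Vp :: "nat \<Rightarrow> (nat \<Rightarrow> nat) \<Rightarrow> (nat \<Rightarrow> nat \<Rightarrow> real) \<Rightarrow> real" where
  "Vp b \<pi> ys = (1 / real (b div 2)) * (\<Sum>j<b div 2. Hk d (ys (\<pi> j)) (ys (\<pi> (j + b div 2))))"

lemma Uf_meas[measurable]: "Uf b \<in> borel_measurable (Om b)"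
  unfolding Uf_def Hk_def by measurable

lemma Vp_meas[measurable]: "Vp b \<pi> \<in> borel_measurable (Om b)"
  unfolding Vp_def Hk_def by measurable

lemma mgf_U:
  assumes b2: "b \<ge> 2" and lam: "\<bar>l\<bar> \<le> real (b div 2) * a0 / 2"
  shows "(\<integral>\<^sup>+ys. ennreal (exp (l * (Uf b ys - s2))) \<partial>Om b) \<le> ennreal (exp (kap * R ^ 4 * l\<^sup>2 / real (b div 2)))"
proof -
  define m where "m = b div 2"
  define Pe where "Pe = {\<pi>. \<pi> permutes {..<b}}"
  have fin: "finite Pe" unfolding Pe_def by (rule finite_permutations) simp
  have idP: "id \<in> Pe" unfolding Pe_def by (simp add: permutes_id)
  have ne: "Pe \<noteq> {}" using idP by auto
  have cpos: "real (card Pe) > 0" using fin idP by (auto simp: card_gt_0_iff)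
  have mpos: "m > 0" "2 * m \<le> b" using b2 unfolding m_def by auto
  have A: "Uf b ys = (\<Sum>\<pi>\<in>Pe. Vp b \<pi> ys) / real (card Pe)" for ys
    unfolding Uf_def Vp_def Pe_def
    by (rule perm_avg[OF b2, of "\<lambda>i k. Hk d (ys i) (ys k)", symmetric]) (simp add: Hk_def)
  have B: "exp (l * (Uf b ys - s2)) \<le> (\<Sum>\<pi>\<in>Pe. exp (l * (Vp b \<pi> ys - s2))) / real (card Pe)" for ys
  proof -
    have "l * (Uf b ys - s2) = (\<Sum>\<pi>\<in>Pe. l * (Vp b \<pi> ys - s2)) / real (card Pe)"
      unfolding A using cpos
      by (simp add: sum_subtractf sum_distrib_left[symmetric] field_simps)
    then show ?thesis using exp_avg_le[OF fin ne, of "\<lambda>\<pi>. l * (Vp b \<pi> ys - s2)"] by simp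
  qed
  define M0 where "M0 = (\<integral>\<^sup>+ys. ennreal (exp (l * (Vp b id ys - s2))) \<partial>Om b)"
  have C: "(\<integral>\<^sup>+ys. ennreal (exp (l * (Vp b \<pi> ys - s2))) \<partial>Om b) = M0" if "\<pi> \<in> Pe" for \<pi>
  proof -
    have p: "\<pi> permutes {..<b}" using that Pe_def by simp
    have "Vp b id (\<lambda>i\<in>{..<b}. ys (\<pi> i)) = Vp b \<pi> ys" for ys
      unfolding Vp_def m_def[symmetric] using mpos
      by (intro arg_cong[where f="\<lambda>x. _ * x"] sum.cong) auto
    then show ?thesis unfolding M0_def
      using perm_invariant[OF p, of "\<lambda>ys. ennreal (exp (l * (Vp b id ys - s2)))"] by simp
  qed
  have "(\<integral>\<^sup>+ys. ennreal (exp (l * (Uf b ys - s2))) \<partial>Om b)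
      \<le> (\<integral>\<^sup>+ys. (\<Sum>\<pi>\<in>Pe. ennreal (1 / real (card Pe)) * ennreal (exp (l * (Vp b \<pi> ys - s2)))) \<partial>Om b)"
  proof (rule nn_integral_mono)
    fix ys
    have "ennreal (exp (l * (Uf b ys - s2))) \<le> ennreal ((\<Sum>\<pi>\<in>Pe. exp (l * (Vp b \<pi> ys - s2))) / real (card Pe))"
      by (rule ennreal_leI[OF B])
    also have "\<dots> = ennreal (\<Sum>\<pi>\<in>Pe. 1 / real (card Pe) * exp (l * (Vp b \<pi> ys - s2)))"
      by (simp add: sum_divide_distrib)
    also have "\<dots> = (\<Sum>\<pi>\<in>Pe. ennreal (1 / real (card Pe) * exp (l * (Vp b \<pi> ys - s2))))"
      by (rule sum_ennreal[symmetric]) simp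
    also have "\<dots> = (\<Sum>\<pi>\<in>Pe. ennreal (1 / real (card Pe)) * ennreal (exp (l * (Vp b \<pi> ys - s2))))"
      by (intro sum.cong refl ennreal_mult) auto
    finally show "ennreal (exp (l * (Uf b ys - s2))) \<le> (\<Sum>\<pi>\<in>Pe. ennreal (1 / real (card Pe)) * ennreal (exp (l * (Vp b \<pi> ys - s2))))" .
  qed
  also have "\<dots> = (\<Sum>\<pi>\<in>Pe. ennreal (1 / real (card Pe)) * (\<integral>\<^sup>+ys. ennreal (exp (l * (Vp b \<pi> ys - s2))) \<partial>Om b))"
    by (subst nn_integral_sum) (auto simp: nn_integral_cmult)
  also have "\<dots> = (\<Sum>\<pi>\<in>Pe. ennreal (1 / real (card Pe)) * M0)"
    by (rule sum.cong) (auto simp: C)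
  also have "\<dots> = M0"
  proof -
    have "(\<Sum>\<pi>\<in>Pe. ennreal (1 / real (card Pe)) * M0) = of_nat (card Pe) * (ennreal (1 / real (card Pe)) * M0)"
      by simp
    also have "\<dots> = (ennreal (real (card Pe)) * ennreal (1 / real (card Pe))) * M0"
      by (simp add: ennreal_of_nat_eq_real_of_nat mult.assoc)
    also have "ennreal (real (card Pe)) * ennreal (1 / real (card Pe)) = 1"
      using cpos by (simp flip: ennreal_mult)
    finally show ?thesis by simp
  qed
  also have "M0 = (\<integral>\<^sup>+ys. (\<Prod>j<m. ennreal (exp (l / real m * (Hk d (ys j) (ys (j + m)) - s2)))) \<partial>Om b)"
    unfolding M0_def
  proof (rule nn_integral_cong)
    fix ys
    have s1: "(\<Sum>j<m. l / real m * (Hk d (ys j) (ys (j + m)) - s2)) = l / real m * ((\<Sum>j<m. Hk d (ys j) (ys (j + m))) - real m * s2)"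
      unfolding sum_distrib_left[symmetric] by (simp add: sum_subtractf)
    have "l * (Vp b id ys - s2) = l / real m * ((\<Sum>j<m. Hk d (ys j) (ys (j + m))) - real m * s2)"
      unfolding Vp_def m_def[symmetric] using mpos by (simp add: field_simps)
    then have "l * (Vp b id ys - s2) = (\<Sum>j<m. l / real m * (Hk d (ys j) (ys (j + m)) - s2))"
      unfolding s1 .
    then have "exp (l * (Vp b id ys - s2)) = (\<Prod>j<m. exp (l / real m * (Hk d (ys j) (ys (j + m)) - s2)))"
      by (simp add: exp_sum)
    then show "ennreal (exp (l * (Vp b id ys - s2))) = (\<Prod>j<m. ennreal (exp (l / real m * (Hk d (ys j) (ys (j + m)) - s2))))"
      by (simp add: prod_ennreal)
  qed
  also have "\<dots> = (\<integral>\<^sup>+y'. (\<integral>\<^sup>+y. ennreal (exp (l / real m * (Hk d y y' - s2))) \<partial>P) \<partial>P) ^ m"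
    by (rule pair_prod[OF mpos(2)]) (unfold Hk_def, measurable)+
  also have "\<dots> \<le> ennreal (exp (kap * R ^ 4 * (l / real m)\<^sup>2)) ^ m"
  proof (rule power_mono)
    show "(\<integral>\<^sup>+y'. (\<integral>\<^sup>+y. ennreal (exp (l / real m * (Hk d y y' - s2))) \<partial>P) \<partial>P) \<le> ennreal (exp (kap * R ^ 4 * (l / real m)\<^sup>2))"
    proof (rule mgf_pair)
      show "\<bar>l / real m\<bar> \<le> a0 / 2" using lam mpos unfolding m_def[symmetric]
        by (simp add: field_simps abs_div)
    qed
  qed simp
  also have "\<dots> = ennreal (exp (kap * R ^ 4 * l\<^sup>2 / real m))"
  proof -
    have "exp (kap * R ^ 4 * (l / real m)\<^sup>2) ^ m = exp (real m * (kap * R ^ 4 * (l / real m)\<^sup>2))"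
      by (rule exp_of_nat_mult[symmetric])
    also have "real m * (kap * R ^ 4 * (l / real m)\<^sup>2) = kap * R ^ 4 * l\<^sup>2 / real m"
      using mpos by (simp add: power2_eq_square field_simps)
    finally show ?thesis by (simp add: ennreal_power)
  qed
  finally show ?thesis unfolding m_def .
qed

end


lemma det_bound:
  fixes s2 R T U A L L' Cs :: real and b m :: nat
  assumes s2: "s2 > 0" and R: "R > 0" and b2: "b \<ge> 2" and m: "m = b div 2"
    and UT: "\<bar>U - s2\<bar> < T" and Tdef: "T = A * R\<^sup>2 * (sqrt (L / real m) + L / real m)"
    and A: "A \<ge> 0" and L: "0 < L" "L \<le> L'" and L2: "ln 2 \<le> L'" and s2R: "s2 \<le> Cs * R\<^sup>2" and Cs: "Cs > 0"
  shows "\<bar>(real b - 1) / real b * U / s2 - 1\<bar>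
         \<le> (4 * A + Cs / ln 2) * (R\<^sup>2 / s2) * (sqrt (L / real b) + L' / real b)"
proof -
  have bpos: "real b > 0" using b2 by simp
  have mpos: "real m > 0" using b2 m by simp
  have m4: "real b \<le> 4 * real m" using b2 m by linarith
  have e1: "(real b - 1) / real b * U / s2 - 1 = (real b - 1) / real b * ((U - s2) / s2) - 1 / real b"
    using bpos s2 by (simp add: field_simps)
  have f01: "0 \<le> (real b - 1) / real b" "(real b - 1) / real b \<le> 1" using bpos b2 by auto
  have "\<bar>(real b - 1) / real b * ((U - s2) / s2)\<bar> = (real b - 1) / real b * \<bar>(U - s2) / s2\<bar>"
    using f01 by (simp only: abs_mult abs_of_nonneg)
  also have "\<dots> \<le> \<bar>(U - s2) / s2\<bar>"
    using f01 by (intro mult_left_le_one_le) auto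
  also have "\<dots> = \<bar>U - s2\<bar> / s2" using s2 by simp
  also have "\<dots> \<le> T / s2" using UT s2 by (simp add: divide_right_mono)
  finally have h: "\<bar>(real b - 1) / real b * ((U - s2) / s2)\<bar> \<le> T / s2" .
  have "\<bar>(real b - 1) / real b * ((U - s2) / s2) - 1 / real b\<bar> \<le> \<bar>(real b - 1) / real b * ((U - s2) / s2)\<bar> + \<bar>1 / real b\<bar>"
    by (rule abs_triangle_ineq4)
  then have t1: "\<bar>(real b - 1) / real b * U / s2 - 1\<bar> \<le> T / s2 + 1 / real b"
    unfolding e1 using h bpos by simp
  have Lm: "L / real m \<le> 4 * (L / real b)"
    using L mpos bpos m4 by (simp add: field_simps)
  have sq: "sqrt (L / real m) \<le> 2 * sqrt (L / real b)"
  proof -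
    have "sqrt (L / real m) \<le> sqrt (4 * (L / real b))" using Lm by simp
    also have "\<dots> = 2 * sqrt (L / real b)" by (subst real_sqrt_mult) simp
    finally show ?thesis .
  qed
  have LL: "L / real b \<le> L' / real b" using L bpos by (simp add: divide_right_mono)
  have "T \<le> A * R\<^sup>2 * (2 * sqrt (L / real b) + 4 * (L' / real b))"
    unfolding Tdef using sq Lm LL A by (intro mult_left_mono) auto
  also have "\<dots> \<le> 4 * A * R\<^sup>2 * (sqrt (L / real b) + L' / real b)"
  proof -
    have "2 * sqrt (L / real b) + 4 * (L' / real b) \<le> 4 * (sqrt (L / real b) + L' / real b)"
      using L bpos by simp
    moreover have "0 \<le> A * R\<^sup>2" using A by simp
    ultimately have "A * R\<^sup>2 * (2 * sqrt (L / real b) + 4 * (L' / real b)) \<le> A * R\<^sup>2 * (4 * (sqrt (L / real b) + L' / real b))"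
      by (rule mult_left_mono)
    then show ?thesis by (simp add: algebra_simps)
  qed
  finally have t2: "T / s2 \<le> 4 * A * (R\<^sup>2 / s2) * (sqrt (L / real b) + L' / real b)"
    using s2 by (simp add: divide_right_mono)
  have ln2: "ln (2::real) > 0" by simp
  have t3: "1 / real b \<le> Cs / ln 2 * (R\<^sup>2 / s2) * (L' / real b)"
  proof -
    have a: "1 \<le> Cs * R\<^sup>2 / s2" using s2R s2 by simp
    have c: "1 \<le> L' / ln 2" using L2 ln2 by simp
    have "1 * 1 \<le> (Cs * R\<^sup>2 / s2) * (L' / ln 2)"
      by (rule mult_mono) (use a c in auto)
    then have "1 / real b \<le> (Cs * R\<^sup>2 / s2) * (L' / ln 2) / real b"
      by (intro divide_right_mono) (use bpos in auto)
    also have "\<dots> = Cs / ln 2 * (R\<^sup>2 / s2) * (L' / real b)" by (simp add: field_simps)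
    finally show ?thesis .
  qed
  have nn: "0 \<le> Cs / ln 2 * (R\<^sup>2 / s2) * sqrt (L / real b)" using ln2 s2 L bpos Cs by simp
  have "\<bar>(real b - 1) / real b * U / s2 - 1\<bar> \<le> 4 * A * (R\<^sup>2 / s2) * (sqrt (L / real b) + L' / real b) + Cs / ln 2 * (R\<^sup>2 / s2) * (L' / real b)"
    using t1 t2 t3 by linarith
  also have "\<dots> \<le> (4 * A + Cs / ln 2) * (R\<^sup>2 / s2) * (sqrt (L / real b) + L' / real b)"
  proof -
    define q where "q = R\<^sup>2 / s2"
    define c2 where "c2 = Cs / ln (2::real)"
    define S where "S = sqrt (L / real b)"
    define Lb where "Lb = L' / real b"
    have "(4 * A + c2) * q * (S + Lb) = 4 * A * q * (S + Lb) + c2 * q * S + c2 * q * Lb"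
      by (simp add: algebra_simps)
    then show ?thesis using nn unfolding q_def[symmetric] c2_def[symmetric] S_def[symmetric] Lb_def[symmetric]
      by linarith
  qed
  finally show ?thesis .
qed


definition kap0 :: real where "kap0 = 64 * exp (1 + 2 * exp 1) * (1 + 2 * exp 1)\<^sup>2"
definition Cs0 :: real where "Cs0 = 4 * (1 + 2 * exp 1)"
definition cst :: real where "cst = 4 * (8 + kap0 / 8) + Cs0 / ln 2"

lemma Cs0_pos: "Cs0 > 0" unfolding Cs0_def by (simp add: add_pos_nonneg)

lemma cst_ge: "cst \<ge> Cs0 / ln 2"
proof -
  have "kap0 \<ge> 0" unfolding kap0_def by simp
  then show ?thesis unfolding cst_def by simp
qed

context vset begin

lemma kap_eq: "kap = kap0" unfolding kap_def kap0_def ..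

lemma s2_Cs: "s2 \<le> Cs0 * R\<^sup>2"
proof -
  have "a0 * s2 \<le> 1 + 2 * exp 1" using s2_le K0_le by simp
  then have "s2 \<le> (1 + 2 * exp 1) / a0" using a0_pos by (simp add: field_simps)
  also have "\<dots> = Cs0 * R\<^sup>2" unfolding a0_def Cs0_def using Rpos by simp
  finally show ?thesis .
qed

lemma inv_K: "inverse ((sqrt (sigma_sq d P) / R)\<^sup>2) = R\<^sup>2 / s2"
proof -
  have "(sqrt (sigma_sq d P) / R)\<^sup>2 = s2 / R\<^sup>2"
    using s2_pos unfolding s2_def by (simp add: power_divide)
  then show ?thesis by simp
qed

lemma chern:
  assumes b2: "b \<ge> 2" and lam: "\<bar>l\<bar> \<le> real (b div 2) * a0 / 2"
  shows "emeasure (Om b) {ys \<in> space (Om b). r \<le> l * (Uf b ys - s2)} \<le> ennreal (exp (- r + kap * R ^ 4 * l\<^sup>2 / real (b div 2)))"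
proof -
  define S where "S = {ys \<in> space (Om b). r \<le> l * (Uf b ys - s2)}"
  have S: "S \<in> sets (Om b)" unfolding S_def by measurable
  have "emeasure (Om b) S = (\<integral>\<^sup>+ys. indicator S ys \<partial>Om b)" using S by simp
  also have "\<dots> \<le> (\<integral>\<^sup>+ys. ennreal (exp (- r)) * ennreal (exp (l * (Uf b ys - s2))) \<partial>Om b)"
  proof (rule nn_integral_mono)
    fix ys
    show "indicator S ys \<le> ennreal (exp (- r)) * ennreal (exp (l * (Uf b ys - s2)))"
    proof (cases "ys \<in> S")
      case True
      then have "0 \<le> - r + l * (Uf b ys - s2)" unfolding S_def by simp
      then have "1 \<le> exp (- r + l * (Uf b ys - s2))" by simp
      then have "ennreal 1 \<le> ennreal (exp (- r) * exp (l * (Uf b ys - s2)))"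
        unfolding exp_add[symmetric] by (rule ennreal_leI)
      then show ?thesis using True by (simp add: ennreal_mult)
    qed simp
  qed
  also have "\<dots> = ennreal (exp (- r)) * (\<integral>\<^sup>+ys. ennreal (exp (l * (Uf b ys - s2))) \<partial>Om b)"
    by (rule nn_integral_cmult) measurable
  also have "\<dots> \<le> ennreal (exp (- r)) * ennreal (exp (kap * R ^ 4 * l\<^sup>2 / real (b div 2)))"
    by (intro mult_left_mono mgf_U[OF b2 lam]) simp
  also have "\<dots> = ennreal (exp (- r) * exp (kap * R ^ 4 * l\<^sup>2 / real (b div 2)))"
    by (rule ennreal_mult[symmetric]) auto
  also have "exp (- r) * exp (kap * R ^ 4 * l\<^sup>2 / real (b div 2)) = exp (- r + kap * R ^ 4 * l\<^sup>2 / real (b div 2))"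
    by (rule exp_add[symmetric])
  finally show ?thesis unfolding S_def .
qed

lemma sv_Uf:
  assumes "b \<ge> 2"
  shows "sample_var d b ys = (real b - 1) / real b * Uf b ys"
proof -
  have "real b * (real b - 1) > 0" using assms by simp
  moreover have b1: "b \<ge> 1" using assms by simp
  ultimately show ?thesis unfolding sample_var_pairs[OF b1] Uf_def
    using assms by (simp add: field_simps power2_eq_square)
qed

lemma main_b2:
  assumes b2: "b \<ge> 2" and dl: "0 < \<delta>" "\<delta> < 1"
  shows "measure (Om b) {ys \<in> space (Om b). \<bar>sample_var d b ys / sigma_sq d P - 1\<bar>
            \<le> cst * inverse ((sqrt (sigma_sq d P) / R)\<^sup>2) *
               (sqrt (ln (2 * real b / \<delta>) / real b) + ln (2 * real (max b d) / \<delta>) / real b)} \<ge> 1 - \<delta>"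
proof -
  interpret O: prob_space "Om b" by (rule prob_space_PiM) (rule prob)
  define m where "m = b div 2"
  define L where "L = ln (2 * real b / \<delta>)"
  define L' where "L' = ln (2 * real (max b d) / \<delta>)"
  define s where "s = sqrt (L / real m)"
  define A where "A = 8 + kap / 8"
  define T where "T = A * R\<^sup>2 * (s + L / real m)"
  have mpos: "real m > 0" using b2 unfolding m_def by simp
  have bpos: "real b > 0" using b2 by simp
  have L0: "L > 0" unfolding L_def using dl b2 by simp
  have LL': "L \<le> L'" unfolding L'_def L_def using dl b2
    by (subst ln_le_cancel_iff) (auto simp: divide_right_mono)
  have L2: "ln 2 \<le> L'"
  proof -
    have "2 \<le> 2 * real (max b d) / \<delta>" using dl b2 by (simp add: field_simps)
    then show ?thesis unfolding L'_def by (subst ln_le_cancel_iff) auto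
  qed
  have s0: "s \<ge> 0" unfolding s_def using L0 mpos by simp
  have ss: "s\<^sup>2 = L / real m" unfolding s_def using L0 mpos by simp
  have Apos: "A \<ge> 0" unfolding A_def using kap_pos by simp
  have RR: "R\<^sup>2 > 0" using Rpos by simp
  define l0 where "l0 = (if s \<le> 1 then real m * s / (8 * R\<^sup>2) else real m / (8 * R\<^sup>2))"
  have l0pos: "l0 \<ge> 0" unfolding l0_def using s0 mpos RR by simp
  have l0le: "\<bar>l0\<bar> \<le> real m * a0 / 2"
  proof -
    have "real m * a0 / 2 = real m / (8 * R\<^sup>2)" unfolding a0_def by simp
    moreover have "l0 \<le> real m / (8 * R\<^sup>2)"
      unfolding l0_def using s0 mpos RR by (auto simp: divide_right_mono mult_left_le)
    ultimately show ?thesis using l0pos by simp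
  qed
  have key: "- (l0 * T) + kap * R ^ 4 * l0\<^sup>2 / real m \<le> - L"
  proof (cases "s \<le> 1")
    case True
    have l0e: "l0 = real m * s / (8 * R\<^sup>2)" unfolding l0_def using True by simp
    have "l0 * T \<ge> l0 * (A * R\<^sup>2 * s)" unfolding T_def
      using l0pos Apos RR L0 mpos by (intro mult_left_mono) (auto simp: algebra_simps)
    also have "l0 * (A * R\<^sup>2 * s) = A * (real m * s\<^sup>2) / 8" unfolding l0e using RR Rpos
      by (simp add: field_simps power2_eq_square)
    also have "real m * s\<^sup>2 = L" unfolding ss using mpos by simp
    finally have t1: "l0 * T \<ge> A * L / 8" .
    have "kap * R ^ 4 * l0\<^sup>2 / real m = kap * (real m * s\<^sup>2) / 64" unfolding l0e using RR mpos Rpos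
      by (simp add: field_simps power2_eq_square power4_eq_xxxx)
    also have "real m * s\<^sup>2 = L" unfolding ss using mpos by simp
    finally have t2: "kap * R ^ 4 * l0\<^sup>2 / real m = kap * L / 64" .
    have "A * L / 8 = L + kap * L / 64" unfolding A_def by (simp add: field_simps)
    then show ?thesis using t1 t2 by linarith
  next
    case False
    have l0e: "l0 = real m / (8 * R\<^sup>2)" unfolding l0_def using False by simp
    have Lm: "L / real m > 1" using False ss s0 by (metis less_1_mult not_le one_less_power pos2 power2_eq_square)
    then have mL: "real m < L" using mpos by (simp add: field_simps)
    have "l0 * T \<ge> l0 * (A * R\<^sup>2 * (L / real m))" unfolding T_def
      using l0pos Apos RR s0 by (intro mult_left_mono) (auto simp: algebra_simps)
    also have "l0 * (A * R\<^sup>2 * (L / real m)) = A * L / 8" unfolding l0e using RR mpos Rpos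
      by (simp add: field_simps)
    finally have t1: "l0 * T \<ge> A * L / 8" .
    have "kap * R ^ 4 * l0\<^sup>2 / real m = kap * real m / 64" unfolding l0e using RR mpos Rpos
      by (simp add: field_simps power2_eq_square power4_eq_xxxx)
    also have "\<dots> \<le> kap * L / 64" using mL kap_pos by (simp add: field_simps)
    finally have t2: "kap * R ^ 4 * l0\<^sup>2 / real m \<le> kap * L / 64" .
    have "A * L / 8 = L + kap * L / 64" unfolding A_def by (simp add: field_simps)
    then show ?thesis using t1 t2 by linarith
  qed
  have eL: "exp (- L) = \<delta> / (2 * real b)" unfolding L_def using dl bpos by (simp add: exp_minus)
  define B1 where "B1 = {ys \<in> space (Om b). l0 * T \<le> l0 * (Uf b ys - s2)}"
  define B2 where "B2 = {ys \<in> space (Om b). l0 * T \<le> (- l0) * (Uf b ys - s2)}"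
  have B1m: "B1 \<in> sets (Om b)" unfolding B1_def by measurable
  have B2m: "B2 \<in> sets (Om b)" unfolding B2_def by measurable
  have pB1: "O.prob B1 \<le> \<delta> / (2 * real b)"
  proof -
    have "emeasure (Om b) B1 \<le> ennreal (exp (- (l0 * T) + kap * R ^ 4 * l0\<^sup>2 / real m))"
      unfolding B1_def m_def by (rule chern[OF b2 l0le[unfolded m_def]])
    also have "\<dots> \<le> ennreal (exp (- L))" using key by (intro ennreal_leI) simp
    finally show ?thesis unfolding eL O.emeasure_eq_measure using dl bpos by (simp add: ennreal_le_iff)
  qed
  have pB2: "O.prob B2 \<le> \<delta> / (2 * real b)"
  proof -
    have l0le': "\<bar>- l0\<bar> \<le> real (b div 2) * a0 / 2" using l0le unfolding m_def by simp
    have "emeasure (Om b) B2 \<le> ennreal (exp (- (l0 * T) + kap * R ^ 4 * (- l0)\<^sup>2 / real m))"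
      unfolding B2_def m_def by (rule chern[OF b2 l0le'])
    also have "\<dots> \<le> ennreal (exp (- L))" using key by (intro ennreal_leI) simp
    finally show ?thesis unfolding eL O.emeasure_eq_measure using dl bpos by (simp add: ennreal_le_iff)
  qed
  define G where "G = {ys \<in> space (Om b). \<bar>sample_var d b ys / sigma_sq d P - 1\<bar>
            \<le> cst * inverse ((sqrt (sigma_sq d P) / R)\<^sup>2) *
               (sqrt (ln (2 * real b / \<delta>) / real b) + ln (2 * real (max b d) / \<delta>) / real b)}"
  have Gm: "G \<in> sets (Om b)"
  proof -
    have "G = {ys \<in> space (Om b). \<bar>(real b - 1) / real b * Uf b ys / s2 - 1\<bar>
            \<le> cst * inverse ((sqrt (sigma_sq d P) / R)\<^sup>2) *
               (sqrt (ln (2 * real b / \<delta>) / real b) + ln (2 * real (max b d) / \<delta>) / real b)}"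
      unfolding G_def sv_Uf[OF b2] s2_def by simp
    also have "\<dots> \<in> sets (Om b)" by measurable
    finally show ?thesis .
  qed
  have sub: "space (Om b) - (B1 \<union> B2) \<subseteq> G"
  proof
    fix ys assume ys: "ys \<in> space (Om b) - (B1 \<union> B2)"
    then have n1: "\<not> l0 * T \<le> l0 * (Uf b ys - s2)" and n2: "\<not> l0 * T \<le> (- l0) * (Uf b ys - s2)"
      unfolding B1_def B2_def by auto
    have l0p: "l0 > 0" using l0pos n1 by (cases "l0 = 0") auto
    have UT1: "Uf b ys - s2 < T" using n1 l0p by (simp add: mult_le_cancel_left_pos)
    have "(- l0) * (Uf b ys - s2) = l0 * (s2 - Uf b ys)" by (simp add: algebra_simps)
    with n2 have "\<not> l0 * T \<le> l0 * (s2 - Uf b ys)" by simp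
    then have UT2: "s2 - Uf b ys < T" using l0p by (simp add: mult_le_cancel_left_pos)
    have UT: "\<bar>Uf b ys - s2\<bar> < T" using UT1 UT2 by (simp add: abs_less_iff)
    have "\<bar>(real b - 1) / real b * Uf b ys / s2 - 1\<bar>
         \<le> (4 * A + Cs0 / ln 2) * (R\<^sup>2 / s2) * (sqrt (L / real b) + L' / real b)"
      by (rule det_bound[OF s2_pos Rpos b2 m_def UT T_def[unfolded s_def] Apos L0 LL' L2 s2_Cs Cs0_pos])
    moreover have "4 * A + Cs0 / ln 2 = cst" unfolding A_def cst_def kap_eq ..
    ultimately show "ys \<in> G" using ys unfolding G_def sv_Uf[OF b2] inv_K L_def L'_def
      by (simp add: s2_def)
  qed
  have "O.prob G \<ge> O.prob (space (Om b) - (B1 \<union> B2))"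
    by (rule O.finite_measure_mono[OF sub Gm])
  moreover have "O.prob (space (Om b) - (B1 \<union> B2)) = 1 - O.prob (B1 \<union> B2)"
    using B1m B2m by (intro O.prob_compl) auto
  moreover have "O.prob (B1 \<union> B2) \<le> O.prob B1 + O.prob B2"
    using B1m B2m by (rule measure_Un_le)
  moreover have "\<delta> / (2 * real b) + \<delta> / (2 * real b) \<le> \<delta>"
    using dl bpos b2 by (simp add: field_simps)
  ultimately show ?thesis unfolding G_def using pB1 pB2 by linarith
qed

lemma main_b1:
  assumes dl: "0 < \<delta>" "\<delta> < 1"
  shows "measure (Om 1) {ys \<in> space (Om 1). \<bar>sample_var d 1 ys / sigma_sq d P - 1\<bar>
            \<le> cst * inverse ((sqrt (sigma_sq d P) / R)\<^sup>2) *
               (sqrt (ln (2 * real 1 / \<delta>) / real 1) + ln (2 * real (max 1 d) / \<delta>) / real 1)} \<ge> 1 - \<delta>"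
proof -
  interpret O: prob_space "Om 1" by (rule prob_space_PiM) (rule prob)
  define L' where "L' = ln (2 * real (max 1 d) / \<delta>)"
  have L2: "ln 2 \<le> L'"
  proof -
    have "2 \<le> 2 * real (max 1 d) / \<delta>" using dl by (simp add: field_simps)
    then show ?thesis unfolding L'_def by (subst ln_le_cancel_iff) auto
  qed
  have ln2: "ln (2::real) > 0" by simp
  have q: "1 \<le> cst * (R\<^sup>2 / s2) * L'"
  proof -
    have a: "1 \<le> Cs0 * R\<^sup>2 / s2" using s2_Cs s2_pos by simp
    have c: "1 \<le> L' / ln 2" using L2 ln2 by simp
    have "1 * 1 \<le> (Cs0 * R\<^sup>2 / s2) * (L' / ln 2)"
      by (rule mult_mono) (use a c in auto)
    also have "\<dots> = Cs0 / ln 2 * (R\<^sup>2 / s2) * L'" by (simp add: field_simps)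
    also have "\<dots> \<le> cst * (R\<^sup>2 / s2) * L'"
      using cst_ge L2 ln2 s2_pos by (intro mult_right_mono) (auto intro: order_trans[OF less_imp_le[OF ln2]])
    finally show ?thesis by simp
  qed
  have all: "{ys \<in> space (Om 1). \<bar>sample_var d 1 ys / sigma_sq d P - 1\<bar>
            \<le> cst * inverse ((sqrt (sigma_sq d P) / R)\<^sup>2) *
               (sqrt (ln (2 * real 1 / \<delta>) / real 1) + ln (2 * real (max 1 d) / \<delta>) / real 1)} = space (Om 1)"
  proof -
    have "\<bar>sample_var d 1 ys / sigma_sq d P - 1\<bar>
            \<le> cst * inverse ((sqrt (sigma_sq d P) / R)\<^sup>2) *
               (sqrt (ln (2 * real 1 / \<delta>) / real 1) + ln (2 * real (max 1 d) / \<delta>) / real 1)" for ys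
    proof -
      have sv0: "sample_var d 1 ys = 0" using sample_var_pairs[of 1 d ys] by (simp add: Hk_def)
      have sq0: "0 \<le> sqrt (ln (2 / \<delta>))" using dl by simp
      have cpos: "0 < cst" using cst_ge Cs0_pos ln2 by (smt (verit) divide_pos_pos)
      have qpos: "0 \<le> cst * (R\<^sup>2 / s2)" using cpos s2_pos by simp
      have P0: "0 \<le> cst * (R\<^sup>2 / s2) * sqrt (ln (2 / \<delta>))" using qpos sq0 by (rule mult_nonneg_nonneg)
      have "cst * (R\<^sup>2 / s2) * (sqrt (ln (2 / \<delta>)) + L') = cst * (R\<^sup>2 / s2) * sqrt (ln (2 / \<delta>)) + cst * (R\<^sup>2 / s2) * L'"
        by (simp add: distrib_left)
      then have "1 \<le> cst * (R\<^sup>2 / s2) * (sqrt (ln (2 / \<delta>)) + L')" using P0 q by linarith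
      moreover have "\<bar>sample_var d 1 ys / sigma_sq d P - 1\<bar> = 1" using sv0 by simp
      ultimately show ?thesis unfolding inv_K L'_def by simp
    qed
    then show ?thesis by auto
  qed
  show ?thesis unfolding all using O.prob_space dl by simp
qed

end

theorem lemma9:
  shows "\<exists>c::real. c > 0 \<and>
    (\<forall>(d::nat) (b::nat) (P::(nat \<Rightarrow> real) measure) (R::real) (\<delta>::real).
      prob_space P \<and> sets P = sets (vspace d) \<and>
      (\<forall>j<d. integrable P (\<lambda>x. x j)) \<and>
      R > 0 \<and>
      (\<forall>t\<ge>0. measure P {x \<in> space P. vnorm d (centered d P x) \<ge> t}
                 \<le> 2 * exp (- (t\<^sup>2 / (2 * R\<^sup>2)))) \<and>
      integrable P (\<lambda>x. (vnorm d (centered d P x))\<^sup>2) \<and>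
      sigma_sq d P > 0 \<and>
      b \<ge> 1 \<and> 0 < \<delta> \<and> \<delta> < 1
      \<longrightarrow>
      (let \<sigma> = sqrt (sigma_sq d P); K_snr = \<sigma> / R in
       measure (PiM {..<b} (\<lambda>_. P))
         {ys \<in> space (PiM {..<b} (\<lambda>_. P)).
            \<bar>sample_var d b ys / sigma_sq d P - 1\<bar>
              \<le> c * inverse (K_snr\<^sup>2) *
                 (sqrt (ln (2 * real b / \<delta>) / real b)
                  + ln (2 * real (max b d) / \<delta>) / real b)}
       \<ge> 1 - \<delta>))"
proof -
  have cpos: "cst > 0"
  proof -
    have "ln (2::real) > 0" by simp
    then have "Cs0 / ln 2 > 0" using Cs0_pos by simp
    then show ?thesis using cst_ge by linarith
  qed
  show ?thesis
  proof (intro exI[of _ cst] conjI allI impI)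
    show "cst > 0" by (rule cpos)
    fix d b :: nat and P :: "(nat \<Rightarrow> real) measure" and R \<delta> :: real
    assume H: "prob_space P \<and> sets P = sets (vspace d) \<and>
      (\<forall>j<d. integrable P (\<lambda>x. x j)) \<and>
      R > 0 \<and>
      (\<forall>t\<ge>0. measure P {x \<in> space P. vnorm d (centered d P x) \<ge> t}
                 \<le> 2 * exp (- (t\<^sup>2 / (2 * R\<^sup>2)))) \<and>
      integrable P (\<lambda>x. (vnorm d (centered d P x))\<^sup>2) \<and>
      sigma_sq d P > 0 \<and>
      b \<ge> 1 \<and> 0 < \<delta> \<and> \<delta> < 1"
    interpret vset d P R
      by (rule vset.intro) (use H in auto)
    have dl: "0 < \<delta>" "\<delta> < 1" using H by auto
    have b1: "b \<ge> 1" using H by auto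
    show "let \<sigma> = sqrt (sigma_sq d P); K_snr = \<sigma> / R in
       measure (PiM {..<b} (\<lambda>_. P))
         {ys \<in> space (PiM {..<b} (\<lambda>_. P)).
            \<bar>sample_var d b ys / sigma_sq d P - 1\<bar>
              \<le> cst * inverse (K_snr\<^sup>2) *
                 (sqrt (ln (2 * real b / \<delta>) / real b)
                  + ln (2 * real (max b d) / \<delta>) / real b)}
       \<ge> 1 - \<delta>"
    proof (cases "b = 1")
      case True
      then show ?thesis unfolding Let_def using main_b1[OF dl] by simp
    next
      case False
      then have "b \<ge> 2" using b1 by simp
      then show ?thesis unfolding Let_def using main_b2[OF _ dl] by simp
    qed
  qed
qed

end
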